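(* Let $A$ be a Heffter array $H(n;k)$ in which the entries of each row and each column sum (as integers) to $2nk+1$. Suppose there exist two sets of cells $H_1$ and $H_2$, each forming a Hamilton cycle, which are disjoint from each other and from the filled cells of $A$. Then there exists a Heffter array $H(n;k+4)$ whose rows and columns all sum (as integers) to $2n(k+4)+1$, and whose filled cells are precisely the filled cells of $A$ together with the cells of $H_1$ and $H_2$.
   Context: A Heffter array $H(n;k)$ is an $n\times n$ array in which some cells are filled with nonzero integers and the others are empty, such that: each row and each column contains exactly $k$ filled cells; the entries of every row and of every column sum to $0$ modulo $2nk+1$; and for each integer $1\le x\le nk$, exactly one of $x$ or $-x$ appears in the array, and it appears exactly once. Cells of an $n\times n$ array are identified with edges of $K_{n,n}$ (cell $(i,j)$ ↔ edge $\{a_i,b_j\}$); a set of cells forms a Hamilton cycle if the corresponding edge set is a single cycle of length $2n$. *)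

theory Defs
  imports Main
begin

text \<open>An n x n partially filled array is modelled as a function
  A :: nat => nat => int on the index range {0..<n} x {0..<n}; a cell is empty
  iff its value is 0 (entries of a Heffter array are nonzero). Values outside
  the index range are irrelevant.\<close>

definition filled_cells :: "nat \<Rightarrow> (nat \<Rightarrow> nat \<Rightarrow> int) \<Rightarrow> (nat \<times> nat) set" where
  "filled_cells n A = {(i, j). i < n \<and> j < n \<and> A i j \<noteq> 0}"

definition heffter :: "nat \<Rightarrow> nat \<Rightarrow> (nat \<Rightarrow> nat \<Rightarrow> int) \<Rightarrow> bool" where
  "heffter n k A \<longleftrightarrow>
     (\<forall>i<n. card {j. j < n \<and> A i j \<noteq> 0} = k) \<and>
     (\<forall>j<n. card {i. i < n \<and> A i j \<noteq> 0} = k) \<and>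
     (\<forall>i<n. (\<Sum>j<n. A i j) mod (2 * int n * int k + 1) = 0) \<and>
     (\<forall>j<n. (\<Sum>i<n. A i j) mod (2 * int n * int k + 1) = 0) \<and>
     (\<forall>x::int. 1 \<le> x \<and> x \<le> int n * int k \<longrightarrow>
        card {(i, j). (i, j) \<in> filled_cells n A \<and> \<bar>A i j\<bar> = x} = 1)"

definition integer_sums :: "nat \<Rightarrow> (nat \<Rightarrow> nat \<Rightarrow> int) \<Rightarrow> int \<Rightarrow> bool" where
  "integer_sums n A s \<longleftrightarrow>
     (\<forall>i<n. (\<Sum>j<n. A i j) = s) \<and> (\<forall>j<n. (\<Sum>i<n. A i j) = s)"

text \<open>A set C of cells (cell (i,j) = edge {a_i, b_j} of K_{n,n}) is a Hamilton
  cycle: its edges form the cycle a_{r 0} b_{c 0} a_{r 1} b_{c 1} ... a_{r (n-1)} b_{c (n-1)} a_{r 0}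
  through all 2n vertices, of length 2n (the card condition ensures the 2n edges are
  distinct, i.e. it is a genuine cycle).\<close>
definition hamilton_cycle :: "nat \<Rightarrow> (nat \<times> nat) set \<Rightarrow> bool" where
  "hamilton_cycle n C \<longleftrightarrow>
     (\<exists>r c. bij_betw r {..<n} {..<n} \<and> bij_betw c {..<n} {..<n} \<and>
        C = (\<lambda>t. (r t, c t)) ` {..<n} \<union> (\<lambda>t. (r (Suc t mod n), c t)) ` {..<n} \<and>
        card C = 2 * n)"

end

theory Submission imports Defs begin

definition cycP :: "nat \<Rightarrow> (nat\<Rightarrow>nat) \<Rightarrow> (nat\<Rightarrow>nat) \<Rightarrow> (nat\<times>nat) set" where
  "cycP n r c = (\<lambda>t. (r t, c t)) ` {..<n}"
definition cycQ :: "nat \<Rightarrow> (nat\<Rightarrow>nat) \<Rightarrow> (nat\<Rightarrow>nat) \<Rightarrow> (nat\<times>nat) set" where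
  "cycQ n r c = (\<lambda>t. (r (Suc t mod n), c t)) ` {..<n}"

definition lab :: "nat \<Rightarrow> (nat\<Rightarrow>nat) \<Rightarrow> (nat\<Rightarrow>nat) \<Rightarrow> int \<Rightarrow> int \<Rightarrow> int \<Rightarrow> nat \<Rightarrow> nat \<Rightarrow> int" where
  "lab n r c p q e i j = (if (i,j) \<in> cycP n r c then p + e * int (inv_into {..<n} c j)
     else if (i,j) \<in> cycQ n r c then q - e * int (inv_into {..<n} c j) else 0)"

lemma bij_inv_eq: "bij_betw c {..<n} {..<n} \<Longrightarrow> t < n \<Longrightarrow> inv_into {..<n} c (c t) = t"
  by (simp add: bij_betw_imp_inj_on inv_into_f_f)

lemma bij_inv: assumes "bij_betw c {..<n} {..<n}" "j < n"
  shows "inv_into {..<n} c j < n" "c (inv_into {..<n} c j) = j"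
proof -
  have "j \<in> c ` {..<n}" using assms by (simp add: bij_betw_def)
  then show "inv_into {..<n} c j < n" "c (inv_into {..<n} c j) = j"
    using inv_into_into[of j c "{..<n}"] f_inv_into_f[of j c "{..<n}"] by auto
qed

lemma mem_P: assumes "bij_betw c {..<n} {..<n}" "t < n"
  shows "(i, c t) \<in> cycP n r c \<longleftrightarrow> i = r t"
proof
  assume "(i, c t) \<in> cycP n r c"
  then obtain t' where "t' < n" "i = r t'" "c t = c t'" unfolding cycP_def by auto
  with assms have "t = t'" by (metis bij_betw_imp_inj_on inj_on_def lessThan_iff)
  then show "i = r t" using \<open>i = r t'\<close> by simp
next
  assume "i = r t" then show "(i, c t) \<in> cycP n r c" using assms unfolding cycP_def by auto
qed

lemma mem_Q: assumes "bij_betw c {..<n} {..<n}" "t < n"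
  shows "(i, c t) \<in> cycQ n r c \<longleftrightarrow> i = r (Suc t mod n)"
proof
  assume "(i, c t) \<in> cycQ n r c"
  then obtain t' where "t' < n" "i = r (Suc t' mod n)" "c t = c t'" unfolding cycQ_def by auto
  with assms have "t = t'" by (metis bij_betw_imp_inj_on inj_on_def lessThan_iff)
  then show "i = r (Suc t mod n)" using \<open>i = r (Suc t' mod n)\<close> by simp
next
  assume "i = r (Suc t mod n)" then show "(i, c t) \<in> cycQ n r c" using assms unfolding cycQ_def by auto
qed

lemma cyc_neq: assumes "bij_betw c {..<n} {..<n}" "t < n" "cycP n r c \<inter> cycQ n r c = {}"
  shows "r t \<noteq> r (Suc t mod n)"
  using assms mem_P[OF assms(1,2), of "r t" r] mem_Q[OF assms(1,2), of "r t" r] by auto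

lemma lab_ct: assumes "bij_betw c {..<n} {..<n}" "t < n" "cycP n r c \<inter> cycQ n r c = {}"
  shows "lab n r c p q e i (c t) = (if i = r t then p + e * int t else 0)
          + (if i = r (Suc t mod n) then q - e * int t else 0)"
  using cyc_neq[OF assms] mem_P[OF assms(1,2)] mem_Q[OF assms(1,2)] bij_inv_eq[OF assms(1,2)]
  unfolding lab_def by auto

lemma lab_P: assumes "bij_betw c {..<n} {..<n}" "t < n" "cycP n r c \<inter> cycQ n r c = {}"
  shows "lab n r c p q e (r t) (c t) = p + e * int t"
  using lab_ct[OF assms] cyc_neq[OF assms] by simp

lemma lab_Q: assumes "bij_betw c {..<n} {..<n}" "t < n" "cycP n r c \<inter> cycQ n r c = {}"
  shows "lab n r c p q e (r (Suc t mod n)) (c t) = q - e * int t"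
  using lab_ct[OF assms] cyc_neq[OF assms] by simp

lemma suc_mod: "t < n \<Longrightarrow> Suc t mod n = (if Suc t = n then 0 else Suc t)"
  by auto

lemma lab_row: assumes r: "bij_betw r {..<n} {..<n}" and c: "bij_betw c {..<n} {..<n}"
  and d: "cycP n r c \<inter> cycQ n r c = {}" and i: "i < n"
  shows "(\<Sum>j<n. lab n r c p q e i j) = (if i = r 0 then p + q - e * (int n - 1) else p + q + e)"
proof -
  define u where "u = inv_into {..<n} r i"
  have u: "u < n" "r u = i" using bij_inv[OF r i] unfolding u_def by auto
  have ri: "\<And>t. t < n \<Longrightarrow> (i = r t) = (t = u)" using r u
    by (metis bij_betw_imp_inj_on inj_on_def lessThan_iff)
  have n0: "n > 0" using i by simp
  have "(\<Sum>j<n. lab n r c p q e i j) = (\<Sum>t<n. lab n r c p q e i (c t))"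
    using sum.reindex_bij_betw[OF c, of "lab n r c p q e i"] by simp
  also have "\<dots> = (\<Sum>t<n. (if i = r t then p + e * int t else 0))
          + (\<Sum>t<n. (if i = r (Suc t mod n) then q - e * int t else 0))"
    by (simp add: lab_ct[OF c _ d] sum.distrib)
  also have "(\<Sum>t<n. (if i = r t then p + e * int t else 0)) = p + e * int u"
  proof -
    have "(\<Sum>t<n. (if i = r t then p + e * int t else 0)) = (\<Sum>t<n. (if t = u then p + e * int t else 0))"
      by (rule sum.cong) (auto simp: ri)
    then show ?thesis using u by simp
  qed
  also have "(\<Sum>t<n. (if i = r (Suc t mod n) then q - e * int t else 0))
        = (if u = 0 then q - e * (int n - 1) else q - e * (int u - 1))"
  proof -
    define v where "v = (if u = 0 then n - 1 else u - 1)"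
    have v: "v < n" using u n0 unfolding v_def by auto
    have "\<And>t. t < n \<Longrightarrow> (i = r (Suc t mod n)) = (t = v)"
    proof -
      fix t assume t: "t < n"
      have "Suc t mod n < n" using n0 by simp
      then have "(i = r (Suc t mod n)) = (Suc t mod n = u)" using ri by simp
      also have "\<dots> = (t = v)" using t u unfolding v_def suc_mod[OF t] by auto
      finally show "(i = r (Suc t mod n)) = (t = v)" .
    qed
    then have "(\<Sum>t<n. (if i = r (Suc t mod n) then q - e * int t else 0))
        = (\<Sum>t<n. (if t = v then q - e * int t else 0))"
      by (intro sum.cong) auto
    then show ?thesis using v n0 unfolding v_def by (auto simp: of_nat_diff)
  qed
  finally show ?thesis using u(2) ri[of 0] n0 by (auto simp: algebra_simps)
qed

lemma lab_col: assumes r: "bij_betw r {..<n} {..<n}" and c: "bij_betw c {..<n} {..<n}"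
  and d: "cycP n r c \<inter> cycQ n r c = {}" and j: "j < n"
  shows "(\<Sum>i<n. lab n r c p q e i j) = p + q"
proof -
  define w where "w = inv_into {..<n} c j"
  have w: "w < n" "c w = j" using bij_inv[OF c j] unfolding w_def by auto
  have rw: "r w < n" "r (Suc w mod n) < n" using r w(1) by (auto simp: bij_betw_def)
  have "(\<Sum>i<n. lab n r c p q e i j) = (\<Sum>i<n. (if i = r w then p + e * int w else 0)
          + (if i = r (Suc w mod n) then q - e * int w else 0))"
    using lab_ct[OF c w(1) d] w(2) by simp
  also have "\<dots> = p + q" using rw by (simp add: sum.distrib)
  finally show ?thesis .
qed

lemma shift_inv: fixes t s n :: nat assumes "t < n" "s < n" shows "((t + s) mod n + (n - s)) mod n = t"
proof -
  have "((t + s) mod n + (n - s)) mod n = (t + s + (n - s)) mod n" by (rule mod_add_left_eq)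
  also have "t + s + (n - s) = t + n" using assms by simp
  finally show ?thesis using assms by simp
qed

lemma shift_bij: fixes s n :: nat assumes "s < n" shows "bij_betw (\<lambda>t. (t + s) mod n) {..<n} {..<n}"
proof (rule bij_betw_byWitness[where f'="\<lambda>t. (t + (n - s)) mod n"])
  show "\<forall>a\<in>{..<n}. ((a + s) mod n + (n - s)) mod n = a" using shift_inv assms by auto
  show "\<forall>a\<in>{..<n}. ((a + (n - s)) mod n + s) mod n = a"
  proof
    fix a assume a: "a \<in> {..<n}"
    have "((a + (n - s)) mod n + s) mod n = (a + (n - s) + s) mod n" by (rule mod_add_left_eq)
    also have "a + (n - s) + s = a + n" using assms by simp
    finally show "((a + (n - s)) mod n + s) mod n = a" using a by simp
  qed
  show "(\<lambda>t. (t + s) mod n) ` {..<n} \<subseteq> {..<n}" using assms by auto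
  show "(\<lambda>t. (t + (n - s)) mod n) ` {..<n} \<subseteq> {..<n}" using assms by auto
qed

lemma ham_disj: assumes "card (cycP n r c \<union> cycQ n r c) = 2 * n"
  shows "cycP n r c \<inter> cycQ n r c = {}"
proof -
  have f: "finite (cycP n r c)" "finite (cycQ n r c)" unfolding cycP_def cycQ_def by auto
  have "card (cycP n r c) \<le> n" "card (cycQ n r c) \<le> n"
    unfolding cycP_def cycQ_def using card_image_le[of "{..<n}"] by auto
  moreover have "card (cycP n r c \<union> cycQ n r c) + card (cycP n r c \<inter> cycQ n r c)
     = card (cycP n r c) + card (cycQ n r c)" using card_Un_Int[OF f] by simp
  ultimately have "card (cycP n r c \<inter> cycQ n r c) = 0" using assms by simp
  then show ?thesis using f by simp
qed

lemma ham_rot: assumes "hamilton_cycle n C" "i0 < n"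
  shows "\<exists>r c. bij_betw r {..<n} {..<n} \<and> bij_betw c {..<n} {..<n} \<and>
     C = cycP n r c \<union> cycQ n r c \<and> cycP n r c \<inter> cycQ n r c = {} \<and> r 0 = i0"
proof -
  obtain r c where r: "bij_betw r {..<n} {..<n}" and c: "bij_betw c {..<n} {..<n}"
    and C: "C = cycP n r c \<union> cycQ n r c" and cd: "card C = 2 * n"
    using assms(1) unfolding hamilton_cycle_def cycP_def cycQ_def by blast
  define s where "s = inv_into {..<n} r i0"
  have s: "s < n" "r s = i0" using bij_inv[OF r assms(2)] unfolding s_def by auto
  define h where "h = (\<lambda>t. (t + s) mod n)"
  have h: "bij_betw h {..<n} {..<n}" unfolding h_def using shift_bij[OF s(1)] .
  have r': "bij_betw (r \<circ> h) {..<n} {..<n}" using bij_betw_trans[OF h r] .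
  have c': "bij_betw (c \<circ> h) {..<n} {..<n}" using bij_betw_trans[OF h c] .
  have himg: "h ` {..<n} = {..<n}" using h by (simp add: bij_betw_def)
  have P: "cycP n (r \<circ> h) (c \<circ> h) = cycP n r c"
  proof -
    have "cycP n (r \<circ> h) (c \<circ> h) = (\<lambda>t. (r t, c t)) ` (h ` {..<n})"
      unfolding cycP_def by (simp add: image_image)
    then show ?thesis using himg unfolding cycP_def by simp
  qed
  have hs: "\<And>t. h (Suc t mod n) = Suc (h t) mod n"
    unfolding h_def by (simp add: mod_add_left_eq mod_Suc_eq)
  have Q: "cycQ n (r \<circ> h) (c \<circ> h) = cycQ n r c"
  proof -
    have "cycQ n (r \<circ> h) (c \<circ> h) = (\<lambda>t. (r (Suc t mod n), c t)) ` (h ` {..<n})"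
      unfolding cycQ_def by (simp add: image_image hs)
    then show ?thesis using himg unfolding cycQ_def by simp
  qed
  have "(r \<circ> h) 0 = i0" using s unfolding h_def by simp
  moreover have "cycP n r c \<inter> cycQ n r c = {}" using ham_disj cd C by simp
  ultimately show ?thesis using r' c' P Q C by metis
qed

lemma sum_ind: "finite J \<Longrightarrow> (\<Sum>j\<in>J. if P j then 1 else 0 :: int) = int (card {j\<in>J. P j})"
  by (simp add: sum.inter_filter[symmetric])

lemma heffter_bound: assumes h: "heffter n k A" and ij: "i < n" "j < n" "A i j \<noteq> 0"
  shows "\<bar>A i j\<bar> \<le> int n * int k"
proof -
  define S where "S = filled_cells n A"
  define T where "T = (\<lambda>x::int. {(i, j). (i, j) \<in> S \<and> \<bar>A i j\<bar> = x})"
  have SS: "S = Sigma {..<n} (\<lambda>i. {j. j < n \<and> A i j \<noteq> 0})"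
    unfolding S_def filled_cells_def by auto
  have fS: "finite S" unfolding SS by auto
  have "card S = (\<Sum>i<n. card {j. j < n \<and> A i j \<noteq> 0})" unfolding SS
    by (rule card_SigmaI) auto
  also have "\<dots> = n * k" using h unfolding heffter_def by simp
  finally have cS: "card S = n * k" .
  have T1: "\<And>x. x \<in> {1..int n * int k} \<Longrightarrow> card (T x) = 1"
    using h unfolding heffter_def T_def S_def by auto
  have fT: "\<And>x. finite (T x)" using fS unfolding T_def
    by (rule finite_subset[rotated]) auto
  have "card (\<Union>x\<in>{1..int n * int k}. T x) = (\<Sum>x\<in>{1..int n * int k}. card (T x))"
    by (rule card_UN_disjoint, simp, simp add: fT, auto simp: T_def)
  also have "\<dots> = card {1..int n * int k}" using T1 by simp
  also have "\<dots> = n * k" by (simp flip: of_nat_mult)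
  finally have cU: "card (\<Union>x\<in>{1..int n * int k}. T x) = card S" using cS by simp
  have "(\<Union>x\<in>{1..int n * int k}. T x) \<subseteq> S" unfolding T_def by auto
  then have U: "(\<Union>x\<in>{1..int n * int k}. T x) = S" using card_subset_eq[OF fS] cU by blast
  have "(i, j) \<in> S" using ij unfolding S_def filled_cells_def by auto
  then obtain x where "x \<in> {1..int n * int k}" "(i, j) \<in> T x" using U by blast
  then show ?thesis unfolding T_def by auto
qed

lemma sum_ind': "(\<Sum>j<(n::nat). if P j then 1 else 0 :: int) = int (card {j. j < n \<and> P j})"
proof -
  have "{j \<in> {..<n}. P j} = {j. j < n \<and> P j}" by auto
  then show ?thesis using sum_ind[of "{..<n}" P, OF finite_lessThan] by (simp only:)
qed

lemma lab_ind: "lab n r c 1 1 0 i j = (if (i, j) \<in> cycP n r c \<union> cycQ n r c then 1 else 0)"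
  unfolding lab_def by auto

lemma lab_out: "(i, j) \<notin> cycP n r c \<union> cycQ n r c \<Longrightarrow> lab n r c p q e i j = 0"
  unfolding lab_def by auto

lemma cyc_sub: assumes "bij_betw r {..<n} {..<n}" "bij_betw c {..<n} {..<n}"
    "(i, j) \<in> cycP n r c \<union> cycQ n r c"
  shows "i < n" "j < n"
proof -
  have n0: "n > 0" using assms(3) unfolding cycP_def cycQ_def by auto
  have "\<And>t. t < n \<Longrightarrow> r t < n \<and> c t < n \<and> r (Suc t mod n) < n"
    using assms(1,2) n0 unfolding bij_betw_def by auto
  then show "i < n" "j < n" using assms(3) unfolding cycP_def cycQ_def by auto
qed

lemma cyc_param: assumes r: "bij_betw r {..<n} {..<n}" and c: "bij_betw c {..<n} {..<n}"
    and d: "cycP n r c \<inter> cycQ n r c = {}" and z: "(i, j) \<in> cycP n r c \<union> cycQ n r c"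
  shows "\<exists>t<n. ((i, j) = (r t, c t) \<and> lab n r c p q e i j = p + e * int t) \<or>
      ((i, j) = (r (Suc t mod n), c t) \<and> lab n r c p q e i j = q - e * int t)"
proof (cases "(i, j) \<in> cycP n r c")
  case True
  then obtain t where t: "t < n" "(i, j) = (r t, c t)" unfolding cycP_def by auto
  then show ?thesis using lab_P[OF c t(1) d] by auto
next
  case False
  then have "(i, j) \<in> cycQ n r c" using z by auto
  then obtain t where t: "t < n" "(i, j) = (r (Suc t mod n), c t)" unfolding cycQ_def by auto
  then show ?thesis using lab_Q[OF c t(1) d] by auto
qed

theorem theorem2p2:
  fixes n k :: nat and A :: "nat \<Rightarrow> nat \<Rightarrow> int" and H1 H2 :: "(nat \<times> nat) set"
  assumes "heffter n k A"
    and "integer_sums n A (2 * int n * int k + 1)"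
    and "hamilton_cycle n H1" and "hamilton_cycle n H2"
    and "H1 \<inter> H2 = {}"
    and "H1 \<inter> filled_cells n A = {}" and "H2 \<inter> filled_cells n A = {}"
  shows "\<exists>B :: nat \<Rightarrow> nat \<Rightarrow> int. heffter n (k + 4) B \<and>
           integer_sums n B (2 * int n * int (k + 4) + 1) \<and>
           filled_cells n B = filled_cells n A \<union> H1 \<union> H2"
proof (cases "n = 0")
  case True
  have "H1 = {}" "H2 = {}" using assms(3,4) True unfolding hamilton_cycle_def by auto
  then show ?thesis using True
    by (intro exI[of _ "\<lambda>_ _. 0"]) (auto simp: heffter_def integer_sums_def filled_cells_def)
next
  case False
  then have n0: "0 < n" by simp
  obtain r1 c1 where r1: "bij_betw r1 {..<n} {..<n}" and c1: "bij_betw c1 {..<n} {..<n}"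
    and H1: "H1 = cycP n r1 c1 \<union> cycQ n r1 c1" and d1: "cycP n r1 c1 \<inter> cycQ n r1 c1 = {}"
    and r10: "r1 0 = 0"
    using ham_rot[OF assms(3) n0] by blast
  obtain r2 c2 where r2: "bij_betw r2 {..<n} {..<n}" and c2: "bij_betw c2 {..<n} {..<n}"
    and H2: "H2 = cycP n r2 c2 \<union> cycQ n r2 c2" and d2: "cycP n r2 c2 \<inter> cycQ n r2 c2 = {}"
    and r20: "r2 0 = 0"
    using ham_rot[OF assms(4) n0] by blast
  define N where "N = int n * int k"
  define L1 where "L1 = lab n r1 c1 (N + 1) (N + 2 * int n) 1"
  define L2 where "L2 = lab n r2 c2 (N + 3 * int n) (N + 3 * int n + 1) (-1)"
  define B where "B = (\<lambda>i j. L1 i j + L2 i j - A i j)"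
  have hA: "heffter n k A" by fact
  have sub1: "\<And>i j. (i, j) \<in> H1 \<Longrightarrow> i < n \<and> j < n" using cyc_sub[OF r1 c1] H1 by blast
  have sub2: "\<And>i j. (i, j) \<in> H2 \<Longrightarrow> i < n \<and> j < n" using cyc_sub[OF r2 c2] H2 by blast
  have AZ1: "\<And>i j. (i, j) \<in> H1 \<Longrightarrow> A i j = 0"
    using assms(6) sub1 unfolding filled_cells_def by blast
  have AZ2: "\<And>i j. (i, j) \<in> H2 \<Longrightarrow> A i j = 0"
    using assms(7) sub2 unfolding filled_cells_def by blast
  have Z1: "\<And>i j. (i, j) \<notin> H1 \<Longrightarrow> L1 i j = 0" unfolding L1_def H1 using lab_out by blast
  have Z2: "\<And>i j. (i, j) \<notin> H2 \<Longrightarrow> L2 i j = 0" unfolding L2_def H2 using lab_out by blast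
  have F1: "\<And>i j. (i, j) \<in> H1 \<Longrightarrow> \<exists>t<n. ((i, j) = (r1 t, c1 t) \<and> L1 i j = N + 1 + int t) \<or>
      ((i, j) = (r1 (Suc t mod n), c1 t) \<and> L1 i j = N + 2 * int n - int t)"
  proof -
    fix i j assume h: "(i, j) \<in> H1"
    obtain t where "t < n" "((i, j) = (r1 t, c1 t) \<and> L1 i j = (N + 1) + 1 * int t) \<or>
      ((i, j) = (r1 (Suc t mod n), c1 t) \<and> L1 i j = (N + 2 * int n) - 1 * int t)"
      using cyc_param[OF r1 c1 d1, of i j "N + 1" "N + 2 * int n" 1] h H1 unfolding L1_def by blast
    then show "\<exists>t<n. ((i, j) = (r1 t, c1 t) \<and> L1 i j = N + 1 + int t) \<or>
      ((i, j) = (r1 (Suc t mod n), c1 t) \<and> L1 i j = N + 2 * int n - int t)" by auto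
  qed
  have F2: "\<And>i j. (i, j) \<in> H2 \<Longrightarrow> \<exists>t<n. ((i, j) = (r2 t, c2 t) \<and> L2 i j = N + 3 * int n - int t) \<or>
      ((i, j) = (r2 (Suc t mod n), c2 t) \<and> L2 i j = N + 3 * int n + 1 + int t)"
  proof -
    fix i j assume h: "(i, j) \<in> H2"
    obtain t where "t < n" "((i, j) = (r2 t, c2 t) \<and> L2 i j = (N + 3 * int n) + (-1) * int t) \<or>
      ((i, j) = (r2 (Suc t mod n), c2 t) \<and> L2 i j = (N + 3 * int n + 1) - (-1) * int t)"
      using cyc_param[OF r2 c2 d2, of i j "N + 3 * int n" "N + 3 * int n + 1" "-1"] h H2 unfolding L2_def by blast
    then show "\<exists>t<n. ((i, j) = (r2 t, c2 t) \<and> L2 i j = N + 3 * int n - int t) \<or>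
      ((i, j) = (r2 (Suc t mod n), c2 t) \<and> L2 i j = N + 3 * int n + 1 + int t)" by auto
  qed
  have BH1: "\<And>i j. (i, j) \<in> H1 \<Longrightarrow> B i j = L1 i j \<and> N < L1 i j"
  proof -
    fix i j assume h: "(i, j) \<in> H1"
    then have "(i, j) \<notin> H2" using assms(5) by auto
    then have "B i j = L1 i j" using h AZ1 Z2 unfolding B_def by simp
    moreover have "N < L1 i j" using F1[OF h] by auto
    ultimately show "B i j = L1 i j \<and> N < L1 i j" by simp
  qed
  have BH2: "\<And>i j. (i, j) \<in> H2 \<Longrightarrow> B i j = L2 i j \<and> N < L2 i j"
  proof -
    fix i j assume h: "(i, j) \<in> H2"
    then have "(i, j) \<notin> H1" using assms(5) by auto
    then have "B i j = L2 i j" using h AZ2 Z1 unfolding B_def by simp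
    moreover have "N < L2 i j" using F2[OF h] by auto
    ultimately show "B i j = L2 i j \<and> N < L2 i j" by simp
  qed
  have BA: "\<And>i j. (i, j) \<notin> H1 \<Longrightarrow> (i, j) \<notin> H2 \<Longrightarrow> B i j = - A i j"
    using Z1 Z2 unfolding B_def by simp
  have N0: "0 \<le> N" unfolding N_def by simp
  have char: "\<And>i j. i < n \<Longrightarrow> j < n \<Longrightarrow> (B i j \<noteq> 0) = (A i j \<noteq> 0 \<or> (i, j) \<in> H1 \<or> (i, j) \<in> H2)"
  proof -
    fix i j assume ij: "i < n" "j < n"
    show "(B i j \<noteq> 0) = (A i j \<noteq> 0 \<or> (i, j) \<in> H1 \<or> (i, j) \<in> H2)"
    proof (cases "(i, j) \<in> H1")
      case True then show ?thesis using BH1[of i j] N0 by auto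
    next
      case False
      show ?thesis
      proof (cases "(i, j) \<in> H2")
        case True then show ?thesis using BH2[of i j] N0 by auto
      next
        case F2: False then show ?thesis using False BA[of i j] by auto
      qed
    qed
  qed
  have rowA: "\<And>i. i < n \<Longrightarrow> (\<Sum>j<n. A i j) = 2 * N + 1"
    using assms(2) unfolding integer_sums_def N_def by simp
  have colA: "\<And>j. j < n \<Longrightarrow> (\<Sum>i<n. A i j) = 2 * N + 1"
    using assms(2) unfolding integer_sums_def N_def by simp
  have rowB: "\<And>i. i < n \<Longrightarrow> (\<Sum>j<n. B i j) = 2 * int n * int (k + 4) + 1"
  proof -
    fix i assume i: "i < n"
    have "(\<Sum>j<n. B i j) = (\<Sum>j<n. L1 i j) + (\<Sum>j<n. L2 i j) - (\<Sum>j<n. A i j)"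
      unfolding B_def by (simp add: sum.distrib sum_subtractf)
    also have "\<dots> = 2 * int n * int (k + 4) + 1"
      unfolding L1_def L2_def lab_row[OF r1 c1 d1 i] lab_row[OF r2 c2 d2 i] rowA[OF i] r10 r20
      by (simp add: N_def algebra_simps)
    finally show "(\<Sum>j<n. B i j) = 2 * int n * int (k + 4) + 1" .
  qed
  have colB: "\<And>j. j < n \<Longrightarrow> (\<Sum>i<n. B i j) = 2 * int n * int (k + 4) + 1"
  proof -
    fix j assume j: "j < n"
    have "(\<Sum>i<n. B i j) = (\<Sum>i<n. L1 i j) + (\<Sum>i<n. L2 i j) - (\<Sum>i<n. A i j)"
      unfolding B_def by (simp add: sum.distrib sum_subtractf)
    also have "\<dots> = 2 * int n * int (k + 4) + 1"
      unfolding L1_def L2_def lab_col[OF r1 c1 d1 j] lab_col[OF r2 c2 d2 j] colA[OF j]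
      by (simp add: N_def algebra_simps)
    finally show "(\<Sum>i<n. B i j) = 2 * int n * int (k + 4) + 1" .
  qed
  have IS: "integer_sums n B (2 * int n * int (k + 4) + 1)"
    unfolding integer_sums_def using rowB colB by simp
  have FC: "filled_cells n B = filled_cells n A \<union> H1 \<union> H2"
  proof (rule set_eqI)
    fix z :: "nat \<times> nat"
    obtain i j where z: "z = (i, j)" by (cases z)
    show "z \<in> filled_cells n B \<longleftrightarrow> z \<in> filled_cells n A \<union> H1 \<union> H2"
      unfolding z filled_cells_def using char[of i j] sub1[of i j] sub2[of i j] by auto
  qed
  have ind: "\<And>i j. i < n \<Longrightarrow> j < n \<Longrightarrow> (if B i j \<noteq> 0 then 1 else 0 :: int)
     = (if A i j \<noteq> 0 then 1 else 0) + lab n r1 c1 1 1 0 i j + lab n r2 c2 1 1 0 i j"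
  proof -
    fix i j assume ij: "i < n" "j < n"
    show "(if B i j \<noteq> 0 then 1 else 0 :: int)
     = (if A i j \<noteq> 0 then 1 else 0) + lab n r1 c1 1 1 0 i j + lab n r2 c2 1 1 0 i j"
      unfolding lab_ind H1[symmetric] H2[symmetric] char[OF ij]
      using AZ1[of i j] AZ2[of i j] assms(5) by auto
  qed
  have rowC: "\<And>i. i < n \<Longrightarrow> card {j. j < n \<and> B i j \<noteq> 0} = k + 4"
  proof -
    fix i assume i: "i < n"
    have "int (card {j. j < n \<and> B i j \<noteq> 0}) = (\<Sum>j<n. if B i j \<noteq> 0 then 1 else 0)"
      by (rule sum_ind'[symmetric])
    also have "\<dots> = (\<Sum>j<n. (if A i j \<noteq> 0 then 1 else 0) + lab n r1 c1 1 1 0 i j + lab n r2 c2 1 1 0 i j)"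
      using ind i by (intro sum.cong) auto
    also have "\<dots> = int (card {j. j < n \<and> A i j \<noteq> 0}) + 2 + 2"
      unfolding sum.distrib sum_ind' lab_row[OF r1 c1 d1 i] lab_row[OF r2 c2 d2 i] by simp
    also have "\<dots> = int (k + 4)" using hA i unfolding heffter_def by simp
    finally show "card {j. j < n \<and> B i j \<noteq> 0} = k + 4" by simp
  qed
  have colC: "\<And>j. j < n \<Longrightarrow> card {i. i < n \<and> B i j \<noteq> 0} = k + 4"
  proof -
    fix j assume j: "j < n"
    have "int (card {i. i < n \<and> B i j \<noteq> 0}) = (\<Sum>i<n. if B i j \<noteq> 0 then 1 else 0)"
      by (rule sum_ind'[symmetric])
    also have "\<dots> = (\<Sum>i<n. (if A i j \<noteq> 0 then 1 else 0) + lab n r1 c1 1 1 0 i j + lab n r2 c2 1 1 0 i j)"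
      using ind j by (intro sum.cong) auto
    also have "\<dots> = int (card {i. i < n \<and> A i j \<noteq> 0}) + 2 + 2"
      unfolding sum.distrib sum_ind' lab_col[OF r1 c1 d1 j] lab_col[OF r2 c2 d2 j] by simp
    also have "\<dots> = int (k + 4)" using hA j unfolding heffter_def by simp
    finally show "card {i. i < n \<and> B i j \<noteq> 0} = k + 4" by simp
  qed
  have P1m: "\<And>t. t < n \<Longrightarrow> (r1 t, c1 t) \<in> H1" unfolding H1 cycP_def by auto
  have Q1m: "\<And>t. t < n \<Longrightarrow> (r1 (Suc t mod n), c1 t) \<in> H1" unfolding H1 cycQ_def by auto
  have P2m: "\<And>t. t < n \<Longrightarrow> (r2 t, c2 t) \<in> H2" unfolding H2 cycP_def by auto
  have Q2m: "\<And>t. t < n \<Longrightarrow> (r2 (Suc t mod n), c2 t) \<in> H2" unfolding H2 cycQ_def by auto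
  have P1v: "\<And>t. t < n \<Longrightarrow> B (r1 t) (c1 t) = N + 1 + int t"
    using BH1 P1m lab_P[OF c1 _ d1] unfolding L1_def by simp
  have Q1v: "\<And>t. t < n \<Longrightarrow> B (r1 (Suc t mod n)) (c1 t) = N + 2 * int n - int t"
    using BH1 Q1m lab_Q[OF c1 _ d1] unfolding L1_def by simp
  have P2v: "\<And>t. t < n \<Longrightarrow> B (r2 t) (c2 t) = N + 3 * int n - int t"
    using BH2 P2m lab_P[OF c2 _ d2] unfolding L2_def by simp
  have Q2v: "\<And>t. t < n \<Longrightarrow> B (r2 (Suc t mod n)) (c2 t) = N + 3 * int n + 1 + int t"
    using BH2 Q2m lab_Q[OF c2 _ d2] unfolding L2_def by simp
  have G: "\<And>i j. (i, j) \<in> H1 \<union> H2 \<Longrightarrow> \<exists>t<n.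
      ((i, j) = (r1 t, c1 t) \<and> B i j = N + 1 + int t) \<or>
      ((i, j) = (r1 (Suc t mod n), c1 t) \<and> B i j = N + 2 * int n - int t) \<or>
      ((i, j) = (r2 t, c2 t) \<and> B i j = N + 3 * int n - int t) \<or>
      ((i, j) = (r2 (Suc t mod n), c2 t) \<and> B i j = N + 3 * int n + 1 + int t)"
  proof -
    fix i j assume h: "(i, j) \<in> H1 \<union> H2"
    show "?thesis i j"
    proof (cases "(i, j) \<in> H1")
      case True
      then obtain t where "t < n" "((i, j) = (r1 t, c1 t) \<and> L1 i j = N + 1 + int t) \<or>
        ((i, j) = (r1 (Suc t mod n), c1 t) \<and> L1 i j = N + 2 * int n - int t)" using F1 by blast
      then show ?thesis using BH1[OF True] by auto
    next
      case False
      then have h2: "(i, j) \<in> H2" using h by auto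
      then obtain t where "t < n" "((i, j) = (r2 t, c2 t) \<and> L2 i j = N + 3 * int n - int t) \<or>
        ((i, j) = (r2 (Suc t mod n), c2 t) \<and> L2 i j = N + 3 * int n + 1 + int t)" using F2 by blast
      then show ?thesis using BH2[OF h2] by auto
    qed
  qed
  define cand where "cand = (\<lambda>w::nat. if w \<le> n then (r1 (w - 1), c1 (w - 1))
      else if w \<le> 2 * n then (r1 (Suc (2 * n - w) mod n), c1 (2 * n - w))
      else if w \<le> 3 * n then (r2 (3 * n - w), c2 (3 * n - w))
      else (r2 (Suc (w - 3 * n - 1) mod n), c2 (w - 3 * n - 1)))"
  have canon: "\<And>i j. (i, j) \<in> H1 \<union> H2 \<Longrightarrow> (i, j) = cand (nat (B i j - N))"
  proof -
    fix i j assume h: "(i, j) \<in> H1 \<union> H2"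
    obtain t where t: "t < n" "((i, j) = (r1 t, c1 t) \<and> B i j = N + 1 + int t) \<or>
      ((i, j) = (r1 (Suc t mod n), c1 t) \<and> B i j = N + 2 * int n - int t) \<or>
      ((i, j) = (r2 t, c2 t) \<and> B i j = N + 3 * int n - int t) \<or>
      ((i, j) = (r2 (Suc t mod n), c2 t) \<and> B i j = N + 3 * int n + 1 + int t)" using G[OF h] by blast
    from t(2) show "(i, j) = cand (nat (B i j - N))"
    proof (elim disjE conjE)
      assume a: "(i, j) = (r1 t, c1 t)" "B i j = N + 1 + int t"
      have "nat (B i j - N) = t + 1" using a(2) by simp
      then show ?thesis using a(1) t(1) unfolding cand_def by simp
    next
      assume a: "(i, j) = (r1 (Suc t mod n), c1 t)" "B i j = N + 2 * int n - int t"
      have "nat (B i j - N) = 2 * n - t" using a(2) t(1) by (simp add: of_nat_diff nat_diff_distrib)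
      moreover have "\<not> 2 * n - t \<le> n" "2 * n - (2 * n - t) = t" using t(1) by auto
      ultimately show ?thesis using a(1) unfolding cand_def by simp
    next
      assume a: "(i, j) = (r2 t, c2 t)" "B i j = N + 3 * int n - int t"
      have "nat (B i j - N) = 3 * n - t" using a(2) t(1) by (simp add: of_nat_diff nat_diff_distrib)
      moreover have "\<not> 3 * n - t \<le> n" "\<not> 3 * n - t \<le> 2 * n" "3 * n - (3 * n - t) = t" using t(1) by auto
      ultimately show ?thesis using a(1) unfolding cand_def by simp
    next
      assume a: "(i, j) = (r2 (Suc t mod n), c2 t)" "B i j = N + 3 * int n + 1 + int t"
      have "nat (B i j - N) = 3 * n + 1 + t" using a(2) by (simp add: nat_add_distrib)
      moreover have "\<not> 3 * n + 1 + t \<le> n" "\<not> 3 * n + 1 + t \<le> 2 * n" "\<not> 3 * n + 1 + t \<le> 3 * n"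
        "3 * n + 1 + t - 3 * n - 1 = t" by auto
      ultimately show ?thesis using a(1) unfolding cand_def by simp
    qed
  qed
  have inj: "\<And>i j i' j'. (i, j) \<in> H1 \<union> H2 \<Longrightarrow> (i', j') \<in> H1 \<union> H2 \<Longrightarrow> B i j = B i' j'
     \<Longrightarrow> (i, j) = (i', j')"
    using canon by metis
  have VAL: "\<And>x. 1 \<le> x \<Longrightarrow> x \<le> int n * int (k + 4) \<Longrightarrow>
      card {(i, j). (i, j) \<in> filled_cells n B \<and> \<bar>B i j\<bar> = x} = 1"
  proof -
    fix x assume x1: "1 \<le> x" and x2: "x \<le> int n * int (k + 4)"
    show "card {(i, j). (i, j) \<in> filled_cells n B \<and> \<bar>B i j\<bar> = x} = 1"
    proof (cases "x \<le> N")
      case True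
      have "{(i, j). (i, j) \<in> filled_cells n B \<and> \<bar>B i j\<bar> = x}
          = {(i, j). (i, j) \<in> filled_cells n A \<and> \<bar>A i j\<bar> = x}"
      proof (rule set_eqI)
        fix z :: "nat \<times> nat"
        obtain i j where z: "z = (i, j)" by (cases z)
        have "(\<bar>B i j\<bar> = x) = (\<bar>A i j\<bar> = x \<and> (i, j) \<notin> H1 \<and> (i, j) \<notin> H2)"
        proof (cases "(i, j) \<in> H1")
          case h: True then show ?thesis using BH1[OF h] True x1 by auto
        next
          case F: False
          show ?thesis
          proof (cases "(i, j) \<in> H2")
            case h: True then show ?thesis using BH2[OF h] True x1 by auto
          next
            case False then show ?thesis using F BA[of i j] by auto
          qed
        qed
        moreover have "(i, j) \<in> H1 \<Longrightarrow> A i j = 0" "(i, j) \<in> H2 \<Longrightarrow> A i j = 0" using AZ1 AZ2 by auto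
        ultimately show "z \<in> {(i, j). (i, j) \<in> filled_cells n B \<and> \<bar>B i j\<bar> = x} \<longleftrightarrow>
          z \<in> {(i, j). (i, j) \<in> filled_cells n A \<and> \<bar>A i j\<bar> = x}"
          unfolding z filled_cells_def using char[of i j] x1 by auto
      qed
      then show ?thesis using hA True x1 unfolding heffter_def N_def by simp
    next
      case False
      define w where "w = nat (x - N)"
      have iw: "int w = x - N" using False unfolding w_def by simp
      have x2': "x \<le> N + 4 * int n" using x2 unfolding N_def by (simp add: algebra_simps)
      have xo: "x = N + int w" "1 \<le> w" "w \<le> 4 * n" using iw False x2' by linarith+
      obtain i0 j0 where m: "(i0, j0) \<in> H1 \<union> H2" and v: "B i0 j0 = x"
      proof (cases "w \<le> n")
        case True
        then show ?thesis using that[of "r1 (w - 1)" "c1 (w - 1)"] P1m[of "w - 1"] P1v[of "w - 1"] xo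
          by (simp add: of_nat_diff)
      next
        case F1: False
        show ?thesis
        proof (cases "w \<le> 2 * n")
          case True
          then show ?thesis using that[of "r1 (Suc (2 * n - w) mod n)" "c1 (2 * n - w)"]
            Q1m[of "2 * n - w"] Q1v[of "2 * n - w"] xo F1 by (simp add: of_nat_diff)
        next
          case F2: False
          show ?thesis
          proof (cases "w \<le> 3 * n")
            case True
            then show ?thesis using that[of "r2 (3 * n - w)" "c2 (3 * n - w)"]
              P2m[of "3 * n - w"] P2v[of "3 * n - w"] xo F2 by (simp add: of_nat_diff)
          next
            case F3: False
            then show ?thesis using that[of "r2 (Suc (w - 3 * n - 1) mod n)" "c2 (w - 3 * n - 1)"]
              Q2m[of "w - 3 * n - 1"] Q2v[of "w - 3 * n - 1"] xo by (simp add: of_nat_diff)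
          qed
        qed
      qed
      have "{(i, j). (i, j) \<in> filled_cells n B \<and> \<bar>B i j\<bar> = x} = {(i0, j0)}"
      proof (rule set_eqI)
        fix z :: "nat \<times> nat"
        obtain i j where z: "z = (i, j)" by (cases z)
        have "(i, j) \<in> filled_cells n B \<and> \<bar>B i j\<bar> = x \<longleftrightarrow> (i, j) = (i0, j0)"
        proof
          assume a: "(i, j) \<in> filled_cells n B \<and> \<bar>B i j\<bar> = x"
          then have ij: "i < n" "j < n" "B i j \<noteq> 0" unfolding filled_cells_def by auto
          have hh: "(i, j) \<in> H1 \<union> H2"
          proof (rule ccontr)
            assume "(i, j) \<notin> H1 \<union> H2"
            then have "B i j = - A i j" using BA by auto
            moreover have "A i j \<noteq> 0" using ij calculation by simp
            ultimately have "\<bar>B i j\<bar> \<le> N" using heffter_bound[OF hA ij(1,2)] unfolding N_def by simp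
            then show False using a False by simp
          qed
          have "B i j > 0" using hh BH1 BH2 N0 by force
          then have "B i j = B i0 j0" using a v by simp
          then show "(i, j) = (i0, j0)" using inj[OF hh m] by simp
        next
          assume "(i, j) = (i0, j0)"
          then show "(i, j) \<in> filled_cells n B \<and> \<bar>B i j\<bar> = x"
            using m v x1 sub1[of i0 j0] sub2[of i0 j0] unfolding filled_cells_def by auto
        qed
        then show "z \<in> {(i, j). (i, j) \<in> filled_cells n B \<and> \<bar>B i j\<bar> = x} \<longleftrightarrow> z \<in> {(i0, j0)}"
          unfolding z by simp
      qed
      then show ?thesis by simp
    qed
  qed
  have "heffter n (k + 4) B"
    unfolding heffter_def using rowC colC rowB colB VAL by simp
  then show ?thesis using IS FC by blast
qed

end
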